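(* For every integer $n\ge2$ and every integer $k$ with $0\le k\le\lfloor n/2\rfloor$, \[ d^-_{n,k}=Y(n-k,k)=\binom{n-k}{k}+\binom{n-k-1}{k-1}. \]
   Context: For $n\ge1$ let $\Xi_n$ be the poset on $\{x_1,\dots,x_n\}$ whose cover relations are exactly: $x_2\prec x_1$, $x_3\prec x_2$, and for $3\le i\le n-1$, $x_i\prec x_{i+1}$ if $i$ is odd and $x_{i+1}\prec x_i$ if $i$ is even (so $x_1>x_2>x_3<x_4>x_5<\cdots$). A filter of a poset is an up-closed subset. $\Omega_n$ is the lattice of filters of $\Xi_n$ ordered by reverse inclusion. $d^-_{n,k}$ is the number of elements of $\Omega_n$ that are covered by exactly $k$ elements of $\Omega_n$ (the number of vertices of indegree $k$ in the Hasse diagram oriented from larger to smaller elements; equivalently the number of $k$-element antichains of $\Xi_n$). $Y(n,k)=\binom nk+\binom{n-1}{k-1}$ is the Lucas triangle, with binomials of negative lower index equal to $0$ except $\binom{-1}{-1}=1$. *)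

theory Defs
  imports Main
begin

text \<open>The poset Xi_n on elements 1..n (element i stands for x_i).
  xi_cover n i j means x_i is covered by x_j (x_i \<prec> x_j).\<close>
definition xi_cover :: "nat \<Rightarrow> nat \<Rightarrow> nat \<Rightarrow> bool" where
  "xi_cover n i j \<longleftrightarrow> i \<in> {1..n} \<and> j \<in> {1..n} \<and>
     ((i = 2 \<and> j = 1) \<or> (i = 3 \<and> j = 2) \<or>
      (\<exists>m. 3 \<le> m \<and> m \<le> n - 1 \<and>
         ((odd m \<and> i = m \<and> j = Suc m) \<or> (even m \<and> i = Suc m \<and> j = m))))"

definition xi_less :: "nat \<Rightarrow> nat \<Rightarrow> nat \<Rightarrow> bool" where
  "xi_less n i j \<longleftrightarrow> (i, j) \<in> {(a, b). xi_cover n a b}\<^sup>+"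

definition xi_filter :: "nat \<Rightarrow> nat set \<Rightarrow> bool" where
  "xi_filter n U \<longleftrightarrow> U \<subseteq> {1..n} \<and> (\<forall>x y. x \<in> U \<and> xi_less n x y \<longrightarrow> y \<in> U)"

definition Omega :: "nat \<Rightarrow> nat set set" where
  "Omega n = {U. xi_filter n U}"

definition Omega_le :: "nat set \<Rightarrow> nat set \<Rightarrow> bool" where
  "Omega_le U V \<longleftrightarrow> V \<subseteq> U"

definition Omega_less :: "nat set \<Rightarrow> nat set \<Rightarrow> bool" where
  "Omega_less U V \<longleftrightarrow> Omega_le U V \<and> U \<noteq> V"

definition Omega_covers :: "nat \<Rightarrow> nat set \<Rightarrow> nat set \<Rightarrow> bool" where
  "Omega_covers n G F \<longleftrightarrow> F \<in> Omega n \<and> G \<in> Omega n \<and> Omega_less F G \<and>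
     \<not> (\<exists>H \<in> Omega n. Omega_less F H \<and> Omega_less H G)"

definition dminus :: "nat \<Rightarrow> nat \<Rightarrow> nat" where
  "dminus n k = card {F \<in> Omega n. card {G \<in> Omega n. Omega_covers n G F} = k}"

text \<open>Binomial with integer arguments: zero for negative lower index except
  binom(-1,-1) = 1; for nonnegative lower index the usual (generalized) binomial
  a(a-1)...(a-b+1)/b!, i.e. (-1)^b binom(b-a-1,b) for negative a.\<close>
definition binom :: "int \<Rightarrow> int \<Rightarrow> int" where
  "binom a b = (if a = -1 \<and> b = -1 then 1 else if b < 0 then 0
     else if a \<ge> 0 then int (nat a choose nat b)
     else (-1) ^ nat b * int (nat (b - a - 1) choose nat b))"

definition Y :: "int \<Rightarrow> int \<Rightarrow> int" where
  "Y n k = binom n k + binom (n - 1) (k - 1)"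

end

theory Submission
  imports Defs
begin


definition filt :: "('a \<Rightarrow> 'a \<Rightarrow> bool) \<Rightarrow> 'a set \<Rightarrow> 'a set \<Rightarrow> bool" where
  "filt r S U \<longleftrightarrow> U \<subseteq> S \<and> (\<forall>x y. x \<in> U \<and> r x y \<longrightarrow> y \<in> U)"
definition mins :: "('a \<Rightarrow> 'a \<Rightarrow> bool) \<Rightarrow> 'a set \<Rightarrow> 'a set" where
  "mins r F = {x\<in>F. \<forall>y\<in>F. \<not> r y x}"
definition up :: "('a \<Rightarrow> 'a \<Rightarrow> bool) \<Rightarrow> 'a set \<Rightarrow> 'a set \<Rightarrow> 'a set" where
  "up r S A = {y\<in>S. \<exists>a\<in>A. a = y \<or> r a y}"
definition antich :: "('a \<Rightarrow> 'a \<Rightarrow> bool) \<Rightarrow> 'a set \<Rightarrow> bool" where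
  "antich r A \<longleftrightarrow> (\<forall>a\<in>A. \<forall>b\<in>A. \<not> r a b)"

lemma min_ex:
  fixes h :: "'a \<Rightarrow> nat"
  assumes tr: "\<And>x y z. r x y \<Longrightarrow> r y z \<Longrightarrow> r x z"
    and hm: "\<And>x y. r x y \<Longrightarrow> h x < h y"
  shows "x \<in> X \<Longrightarrow> \<exists>m\<in>X. (m = x \<or> r m x) \<and> (\<forall>y\<in>X. \<not> r y m)"
proof (induction "h x" arbitrary: x rule: less_induct)
  case less
  show ?case
  proof (cases "\<exists>y\<in>X. r y x")
    case True
    then obtain y where y: "y \<in> X" "r y x" by blast
    from less(1)[OF hm[OF y(2)] y(1)] obtain m where "m\<in>X" "m = y \<or> r m y" "\<forall>z\<in>X. \<not> r z m" by blast
    then show ?thesis using y tr by blast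
  next
    case False
    then show ?thesis using less(2) by blast
  qed
qed

locale po =
  fixes r :: "'a \<Rightarrow> 'a \<Rightarrow> bool" and S :: "'a set" and h :: "'a \<Rightarrow> nat"
  assumes tr: "\<And>x y z. r x y \<Longrightarrow> r y z \<Longrightarrow> r x z"
    and hm: "\<And>x y. r x y \<Longrightarrow> h x < h y"
    and inS: "\<And>x y. r x y \<Longrightarrow> x \<in> S \<and> y \<in> S"
begin

lemma irr: "\<not> r x x" using hm by blast

lemma mex: assumes "x \<in> X" shows "\<exists>m\<in>X. (m = x \<or> r m x) \<and> (\<forall>y\<in>X. \<not> r y m)"
  by (rule min_ex[where r=r and h=h, OF tr hm assms])

lemma up_mins:
  assumes f: "filt r S F" shows "up r S (mins r F) = F"
proof (rule set_eqI; rule iffI)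
  fix x assume "x \<in> up r S (mins r F)"
  then obtain a where a: "a \<in> mins r F" "a = x \<or> r a x" "x \<in> S" unfolding up_def by blast
  then have "a \<in> F" unfolding mins_def by blast
  then show "x \<in> F" using a f unfolding filt_def by blast
next
  fix x assume x: "x \<in> F"
  obtain m where m: "m \<in> F" "m = x \<or> r m x" "\<forall>y\<in>F. \<not> r y m" using mex[OF x] by blast
  have "m \<in> mins r F" using m unfolding mins_def by blast
  moreover have "x \<in> S" using x f unfolding filt_def by blast
  ultimately show "x \<in> up r S (mins r F)" using m unfolding up_def by blast
qed

lemma mins_up:
  assumes AS: "A \<subseteq> S" and ac: "antich r A"
  shows "mins r (up r S A) = A"
proof (rule set_eqI; rule iffI)
  fix x assume x: "x \<in> mins r (up r S A)"
  then have xu: "x \<in> up r S A" and xm: "\<forall>y\<in>up r S A. \<not> r y x" unfolding mins_def by auto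
  then obtain a where a: "a \<in> A" "a = x \<or> r a x" unfolding up_def by blast
  have "a \<in> up r S A" using a AS unfolding up_def by blast
  then have "a = x" using a xm by blast
  then show "x \<in> A" using a by simp
next
  fix x assume x: "x \<in> A"
  have "x \<in> up r S A" using x AS unfolding up_def by blast
  moreover have "\<not> r y x" if y: "y \<in> up r S A" for y
  proof
    assume ryx: "r y x"
    from y obtain a where a: "a \<in> A" "a = y \<or> r a y" unfolding up_def by blast
    then have "r a x" using ryx tr[of a y x] by blast
    then show False using ac a x unfolding antich_def by blast
  qed
  ultimately show "x \<in> mins r (up r S A)" unfolding mins_def by blast
qed

lemma filt_up: "filt r S (up r S A)"
  unfolding filt_def
proof (intro conjI allI impI)
  show "up r S A \<subseteq> S" unfolding up_def by blast
  fix x y assume xy: "x \<in> up r S A \<and> r x y"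
  then obtain a where a: "a \<in> A" "a = x \<or> r a x" unfolding up_def by blast
  have "r a y" using a xy tr[of a x y] by blast
  moreover have "y \<in> S" using inS xy by blast
  ultimately show "y \<in> up r S A" using a unfolding up_def by blast
qed

lemma bij: "bij_betw (mins r) {F. filt r S F} {A. A \<subseteq> S \<and> antich r A}"
proof (rule bij_betw_byWitness[where f'="up r S"])
  show "\<forall>a\<in>{F. filt r S F}. up r S (mins r a) = a" using up_mins by blast
  show "\<forall>a\<in>{A. A \<subseteq> S \<and> antich r A}. mins r (up r S a) = a" using mins_up by blast
  show "mins r ` {F. filt r S F} \<subseteq> {A. A \<subseteq> S \<and> antich r A}"
    unfolding mins_def filt_def antich_def by blast
  show "up r S ` {A. A \<subseteq> S \<and> antich r A} \<subseteq> {F. filt r S F}" using filt_up by blast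
qed

lemma covers:
  assumes "filt r S F" "finite F"
  shows "{G. filt r S G \<and> G \<subseteq> F \<and> F \<noteq> G \<and> \<not> (\<exists>H. filt r S H \<and> (H \<subseteq> F \<and> F \<noteq> H) \<and> (G \<subseteq> H \<and> H \<noteq> G))}
     = (\<lambda>x. F - {x}) ` mins r F"
proof (rule set_eqI; rule iffI)
  fix G assume "G \<in> {G. filt r S G \<and> G \<subseteq> F \<and> F \<noteq> G \<and> \<not> (\<exists>H. filt r S H \<and> (H \<subseteq> F \<and> F \<noteq> H) \<and> (G \<subseteq> H \<and> H \<noteq> G))}"
  then have G: "filt r S G" "G \<subseteq> F" "F \<noteq> G" and nH: "\<And>H. filt r S H \<Longrightarrow> H \<subseteq> F \<Longrightarrow> F \<noteq> H \<Longrightarrow> G \<subseteq> H \<Longrightarrow> H = G"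
    by auto
  obtain x where x: "x \<in> F - G" using G by blast
  from mex[OF x] obtain m where m: "m \<in> F - G" "\<forall>y\<in>F - G. \<not> r y m" by blast
  have "\<not> r y m" if "y \<in> F" for y
  proof
    assume rym: "r y m"
    show False
    proof (cases "y \<in> G")
      case True
      then have "m \<in> G" using G(1) rym unfolding filt_def by blast
      then show False using m by blast
    next
      case False
      then show False using m that rym by blast
    qed
  qed
  then have mm: "m \<in> mins r F" using m unfolding mins_def by blast
  have fm: "filt r S (F - {m})"
    unfolding filt_def
  proof (intro conjI allI impI)
    show "F - {m} \<subseteq> S" using assms(1) unfolding filt_def by blast
    fix a b assume ab: "a \<in> F - {m} \<and> r a b"
    then have "b \<in> F" using assms(1) unfolding filt_def by blast
    moreover have "b \<noteq> m" using ab mm unfolding mins_def by blast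
    ultimately show "b \<in> F - {m}" by blast
  qed
  have "F - {m} = G" by (rule nH[OF fm]) (use m G in blast)+
  then show "G \<in> (\<lambda>x. F - {x}) ` mins r F" using mm by blast
next
  fix G assume "G \<in> (\<lambda>x. F - {x}) ` mins r F"
  then obtain m where m: "m \<in> mins r F" "G = F - {m}" by blast
  have mF: "m \<in> F" using m unfolding mins_def by blast
  have fm: "filt r S (F - {m})"
    unfolding filt_def
  proof (intro conjI allI impI)
    show "F - {m} \<subseteq> S" using assms(1) unfolding filt_def by blast
    fix a b assume ab: "a \<in> F - {m} \<and> r a b"
    then have "b \<in> F" using assms(1) unfolding filt_def by blast
    moreover have "b \<noteq> m" using ab m unfolding mins_def by blast
    ultimately show "b \<in> F - {m}" by blast
  qed
  have nH: "\<not> (\<exists>H. (H \<subseteq> F \<and> F \<noteq> H) \<and> (G \<subseteq> H \<and> H \<noteq> G))"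
  proof
    assume "\<exists>H. (H \<subseteq> F \<and> F \<noteq> H) \<and> (G \<subseteq> H \<and> H \<noteq> G)"
    then obtain H where H: "H \<subseteq> F" "F \<noteq> H" "G \<subseteq> H" "H \<noteq> G" by blast
    then have "m \<notin> H" using m by blast
    then have "H \<subseteq> G" using H m by blast
    then show False using H by blast
  qed
  show "G \<in> {G. filt r S G \<and> G \<subseteq> F \<and> F \<noteq> G \<and> \<not> (\<exists>H. filt r S H \<and> (H \<subseteq> F \<and> F \<noteq> H) \<and> (G \<subseteq> H \<and> H \<noteq> G))}"
    using fm m mF nH by blast
qed

lemma card_covers:
  assumes "filt r S F" "finite F"
  shows "card {G. filt r S G \<and> G \<subseteq> F \<and> F \<noteq> G \<and> \<not> (\<exists>H. filt r S H \<and> (H \<subseteq> F \<and> F \<noteq> H) \<and> (G \<subseteq> H \<and> H \<noteq> G))}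
     = card (mins r F)"
  unfolding covers[OF assms]
  apply (rule card_image)
  by (auto simp: inj_on_def mins_def)

end



definition xi_rel :: "nat \<Rightarrow> nat \<Rightarrow> nat \<Rightarrow> bool" where
  "xi_rel n i j \<longleftrightarrow> i \<in> {1..n} \<and> j \<in> {1..n} \<and> ((i=2\<and>j=1) \<or> (i=3\<and>j=2) \<or> (i=3\<and>j=1) \<or>
     (odd i \<and> 3 \<le> i \<and> j = Suc i) \<or> (odd i \<and> 5 \<le> i \<and> Suc j = i))"

lemma cover_rel: "xi_cover n i j \<Longrightarrow> xi_rel n i j"
  unfolding xi_cover_def xi_rel_def
  apply (elim conjE disjE exE)
  apply simp_all
  by presburger

lemma rel_trans: "xi_rel n a b \<Longrightarrow> xi_rel n b c \<Longrightarrow> xi_rel n a c"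
  unfolding xi_rel_def by auto

lemma less_rel: "xi_less n i j \<longleftrightarrow> xi_rel n i j"
proof
  assume "xi_less n i j"
  then have "(i, j) \<in> {(a, b). xi_cover n a b}\<^sup>+" unfolding xi_less_def .
  then show "xi_rel n i j"
    by (induction rule: trancl_induct) (auto intro: cover_rel rel_trans)
next
  assume a: "xi_rel n i j"
  let ?R = "{(a, b). xi_cover n a b}"
  have c: "xi_cover n a b \<Longrightarrow> (a, b) \<in> ?R\<^sup>+" for a b by auto
  show "xi_less n i j" unfolding xi_less_def
  proof -
    have i: "i \<in> {1..n}" "j \<in> {1..n}" using a unfolding xi_rel_def by auto
    consider "i=2 \<and> j=1" | "i=3 \<and> j=2" | "i=3 \<and> j=1" | "odd i \<and> 3 \<le> i \<and> j = Suc i" | "odd i \<and> 5 \<le> i \<and> Suc j = i"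
      using a unfolding xi_rel_def by blast
    then show "(i, j) \<in> ?R\<^sup>+"
    proof cases
      case 1 then show ?thesis using i by (intro c) (simp add: xi_cover_def)
    next
      case 2 then show ?thesis using i by (intro c) (simp add: xi_cover_def)
    next
      case 3
      have "xi_cover n 3 2" "xi_cover n 2 1" using i 3 unfolding xi_cover_def by auto
      then show ?thesis using 3 c trancl_trans by metis
    next
      case 4
      have "xi_cover n i j" proof -
        have "\<exists>m. 3 \<le> m \<and> m \<le> n - 1 \<and> ((odd m \<and> i = m \<and> j = Suc m) \<or> (even m \<and> i = Suc m \<and> j = m))"
          by (rule exI[of _ i]) (use i 4 in auto)
        then show ?thesis unfolding xi_cover_def using i by blast
      qed
      then show ?thesis by (rule c)
    next
      case 5
      have "xi_cover n i j" proof -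
        have "\<exists>m. 3 \<le> m \<and> m \<le> n - 1 \<and> ((odd m \<and> i = m \<and> j = Suc m) \<or> (even m \<and> i = Suc m \<and> j = m))"
          by (rule exI[of _ j]) (use i 5 in auto)
        then show ?thesis unfolding xi_cover_def using i by blast
      qed
      then show ?thesis by (rule c)
    qed
  qed
qed

definition hx :: "nat \<Rightarrow> nat" where
  "hx x = (if x = 1 then 2 else if x = 2 then 1 else if odd x then 0 else 1)"

interpretation X: po "xi_rel n" "{1..n}" hx
  apply standard
  using rel_trans apply blast
  unfolding xi_rel_def hx_def apply auto
  done

lemma filt_eq: "xi_filter n U = filt (xi_rel n) {1..n} U"
  unfolding xi_filter_def filt_def less_rel ..

definition P :: "nat \<Rightarrow> nat set \<Rightarrow> bool" where
  "P n A \<longleftrightarrow> A \<subseteq> {1..n} \<and> (\<forall>i\<in>A. Suc i \<notin> A) \<and> \<not> (1 \<in> A \<and> 3 \<in> A)"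

lemma antich_P: "(A \<subseteq> {1..n} \<and> antich (xi_rel n) A) \<longleftrightarrow> P n A"
proof
  assume a: "A \<subseteq> {1..n} \<and> antich (xi_rel n) A"
  have "Suc i \<notin> A" if "i \<in> A" for i
  proof
    assume s: "Suc i \<in> A"
    have i: "i \<ge> 1" "Suc i \<le> n" using a that s by auto
    have "xi_rel n i (Suc i) \<or> xi_rel n (Suc i) i"
    proof (cases "i \<le> 2")
      case True
      then have "i = 1 \<or> i = 2" using i by auto
      then show ?thesis using i unfolding xi_rel_def by auto
    next
      case False
      show ?thesis
      proof (cases "odd i")
        case True
        then have "xi_rel n i (Suc i)" using i False unfolding xi_rel_def by auto
        then show ?thesis ..
      next
        case e: False
        then have "odd (Suc i)" by simp
        moreover have "5 \<le> Suc i" using False e by presburger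
        ultimately have "xi_rel n (Suc i) i" using i unfolding xi_rel_def by auto
        then show ?thesis ..
      qed
    qed
    then show False using a that s unfolding antich_def by blast
  qed
  moreover have "\<not> (1 \<in> A \<and> 3 \<in> A)"
  proof
    assume "1 \<in> A \<and> 3 \<in> A"
    moreover then have "xi_rel n 3 1" using a unfolding xi_rel_def by auto
    ultimately show False using a unfolding antich_def by blast
  qed
  ultimately show "P n A" using a unfolding P_def by blast
next
  assume p: "P n A"
  have "\<not> xi_rel n a b" if "a \<in> A" "b \<in> A" for a b
  proof
    assume "xi_rel n a b"
    then have "b = Suc a \<or> a = Suc b \<or> (a = 3 \<and> b = 1)" unfolding xi_rel_def by auto
    then show False using p that unfolding P_def by blast
  qed
  then show "A \<subseteq> {1..n} \<and> antich (xi_rel n) A"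
    using p unfolding P_def antich_def by blast
qed



lemma bij_restrict: "bij_betw f A B \<Longrightarrow> bij_betw f {x\<in>A. Q (f x)} {y\<in>B. Q y}"
  unfolding bij_betw_def inj_on_def by auto

lemma dminus_P: "dminus n k = card {A. P n A \<and> card A = k}"
proof -
  have e: "card {G \<in> Omega n. Omega_covers n G F} = card (mins (xi_rel n) F)" if "F \<in> Omega n" for F
  proof -
    have f: "filt (xi_rel n) {1..n} F" using that unfolding Omega_def filt_eq by simp
    have fin: "finite F" using f unfolding filt_def by (meson finite_atLeastAtMost finite_subset)
    have "{G \<in> Omega n. Omega_covers n G F} = {G. filt (xi_rel n) {1..n} G \<and> G \<subseteq> F \<and> F \<noteq> G \<and> \<not> (\<exists>H. filt (xi_rel n) {1..n} H \<and> (H \<subseteq> F \<and> F \<noteq> H) \<and> (G \<subseteq> H \<and> H \<noteq> G))}"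
      using that unfolding Omega_covers_def Omega_def Omega_less_def Omega_le_def filt_eq by auto
    then show ?thesis using X.card_covers[OF f fin] by simp
  qed
  have "{F \<in> Omega n. card {G \<in> Omega n. Omega_covers n G F} = k} = {F \<in> {F. filt (xi_rel n) {1..n} F}. card (mins (xi_rel n) F) = k}"
    using e unfolding Omega_def filt_eq by auto
  then have "dminus n k = card {F \<in> {F. filt (xi_rel n) {1..n} F}. card (mins (xi_rel n) F) = k}"
    unfolding dminus_def by simp
  also have "\<dots> = card {A \<in> {A. A \<subseteq> {1..n} \<and> antich (xi_rel n) A}. card A = k}"
    by (rule bij_betw_same_card, rule bij_restrict, rule X.bij)
  also have "\<dots> = card {A. P n A \<and> card A = k}"
    using antich_P by (metis (no_types, lifting) mem_Collect_eq)
  finally show ?thesis .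
qed



lemma P_fin: "P n A \<Longrightarrow> finite A"
  unfolding P_def using finite_subset by blast

lemma rec_set:
  assumes "n \<ge> 2"
  shows "{A. P (Suc (Suc n)) A \<and> card A = Suc k} = {A. P (Suc n) A \<and> card A = Suc k} \<union> insert (Suc (Suc n)) ` {B. P n B \<and> card B = k}"
proof (rule set_eqI; rule iffI)
  fix A assume "A \<in> {A. P (Suc (Suc n)) A \<and> card A = Suc k}"
  then have A: "P (Suc (Suc n)) A" "card A = Suc k" by auto
  show "A \<in> {A. P (Suc n) A \<and> card A = Suc k} \<union> insert (Suc (Suc n)) ` {B. P n B \<and> card B = k}"
  proof (cases "Suc (Suc n) \<in> A")
    case True
    let ?B = "A - {Suc (Suc n)}"
    have "Suc n \<notin> A" using A True unfolding P_def by blast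
    then have "P n ?B" using A unfolding P_def by (auto simp: le_Suc_eq)
    moreover have "card ?B = k" using A True P_fin by simp
    moreover have "A = insert (Suc (Suc n)) ?B" using True by blast
    ultimately show ?thesis by blast
  next
    case False
    then have "P (Suc n) A" using A unfolding P_def by (auto simp: le_Suc_eq)
    then show ?thesis using A by blast
  qed
next
  fix A assume "A \<in> {A. P (Suc n) A \<and> card A = Suc k} \<union> insert (Suc (Suc n)) ` {B. P n B \<and> card B = k}"
  then show "A \<in> {A. P (Suc (Suc n)) A \<and> card A = Suc k}"
  proof
    assume "A \<in> {A. P (Suc n) A \<and> card A = Suc k}"
    then show ?thesis unfolding P_def by auto
  next
    assume "A \<in> insert (Suc (Suc n)) ` {B. P n B \<and> card B = k}"
    then obtain B where B: "P n B" "card B = k" "A = insert (Suc (Suc n)) B" by blast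
    have "Suc (Suc n) \<notin> B" using B unfolding P_def by auto
    then have "card A = Suc k" using B P_fin by simp
    moreover have "P (Suc (Suc n)) A" using B assms unfolding P_def by auto
    ultimately show ?thesis by blast
  qed
qed

lemma rec_card:
  assumes "n \<ge> 2"
  shows "card {A. P (Suc (Suc n)) A \<and> card A = Suc k} = card {A. P (Suc n) A \<and> card A = Suc k} + card {B. P n B \<and> card B = k}"
proof -
  have fin: "finite {A. P m A \<and> Q A}" for m Q
    by (rule finite_subset[of _ "Pow {1..m}"]) (auto simp: P_def)
  have inj: "inj_on (insert (Suc (Suc n))) {B. P n B \<and> card B = k}"
  proof (rule inj_onI)
    fix x y assume x: "x \<in> {B. P n B \<and> card B = k}" and y: "y \<in> {B. P n B \<and> card B = k}"
      and e: "insert (Suc (Suc n)) x = insert (Suc (Suc n)) y"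
    have "Suc (Suc n) \<notin> x" "Suc (Suc n) \<notin> y" using x y unfolding P_def by auto
    then show "x = y" using e by (metis Diff_insert_absorb)
  qed
  have disj: "{A. P (Suc n) A \<and> card A = Suc k} \<inter> insert (Suc (Suc n)) ` {B. P n B \<and> card B = k} = {}"
    unfolding P_def by auto
  show ?thesis unfolding rec_set[OF assms]
    by (subst card_Un_disjoint[OF fin _ disj]) (auto intro: finite_imageI fin simp: card_image[OF inj])
qed

lemma card0: "card {A. P n A \<and> card A = 0} = 1"
proof -
  have "{A. P n A \<and> card A = 0} = {{}}" using P_fin by (auto simp: P_def)
  then show ?thesis by simp
qed

lemma P2: "P 2 A \<longleftrightarrow> A = {} \<or> A = {1} \<or> A = {2}"
proof
  assume a: "P 2 A"
  have "A \<subseteq> {1,2}" using a unfolding P_def by auto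
  moreover have "\<not> (1 \<in> A \<and> 2 \<in> A)" using a unfolding P_def by (metis Suc_1)
  ultimately show "A = {} \<or> A = {1} \<or> A = {2}" by blast
qed (auto simp: P_def)

lemma P3: "P 3 A \<longleftrightarrow> A = {} \<or> A = {1} \<or> A = {2} \<or> A = {3}"
proof
  assume a: "P 3 A"
  have "A \<subseteq> {1,2,3}" using a unfolding P_def by auto
  moreover have sep: "\<forall>i\<in>A. Suc i \<notin> A" "\<not> (1 \<in> A \<and> 3 \<in> A)" using a unfolding P_def by auto
  have "Suc 1 = (2::nat)" "Suc 2 = (3::nat)" by simp_all
  then have "\<not> (1 \<in> A \<and> 2 \<in> A)" "\<not> (2 \<in> A \<and> 3 \<in> A)" using sep(1) by metis+
  moreover note sep(2)
  ultimately show "A = {} \<or> A = {1} \<or> A = {2} \<or> A = {3}" by blast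
qed (auto simp: P_def)

definition g :: "nat \<Rightarrow> nat \<Rightarrow> nat" where
  "g n k = (if k = 0 then 1 else (n - k choose k) + (n - k - 1 choose (k - 1)))"

lemma base2: "card {A. P 2 A \<and> card A = k} = g 2 k"
proof -
  consider "k = 0" | "k = 1" | "k \<ge> 2" by linarith
  then show ?thesis
  proof cases
    case 1 then show ?thesis using card0 by (simp add: g_def)
  next
    case 2
    then have "{A. P 2 A \<and> card A = k} = {{1},{2}}" unfolding P2 by auto
    then show ?thesis using 2 by (simp add: g_def)
  next
    case 3
    then have "{A. P 2 A \<and> card A = k} = {}" unfolding P2 by auto
    moreover have "g 2 k = 0" using 3 unfolding g_def by simp
    ultimately show ?thesis by (metis card.empty)
  qed
qed

lemma base3: "card {A. P 3 A \<and> card A = k} = g 3 k"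
proof -
  consider "k = 0" | "k = 1" | "k \<ge> 2" by linarith
  then show ?thesis
  proof cases
    case 1 then show ?thesis using card0 by (simp add: g_def)
  next
    case 2
    then have "{A. P 3 A \<and> card A = k} = {{1},{2},{3}}" unfolding P3 by auto
    then show ?thesis using 2 by (simp add: g_def)
  next
    case 3
    then have "{A. P 3 A \<and> card A = k} = {}" unfolding P3 by auto
    moreover have "g 3 k = 0" using 3 unfolding g_def by (cases k) auto
    ultimately show ?thesis by (metis card.empty)
  qed
qed

lemma binom_ar:
  assumes "n \<ge> 2" "j \<ge> 1"
  shows "(n + 1 - j choose (j+1)) + (n - j choose j) = (n - j choose (j+1)) + (n - j - 1 choose j) + ((n - j choose j) + (n - j - 1 choose (j - 1)))"
proof -
  obtain i where j: "j = Suc i" using assms(2) by (cases j) auto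
  show ?thesis
  proof (cases "j < n")
    case True
    define m where "m = n - j - 1"
    have e: "n - j = Suc m" "n + 1 - j = Suc (Suc m)" "n - j - 1 = m" "j - 1 = i" "j + 1 = Suc (Suc i)"
      using True j unfolding m_def by auto
    show ?thesis unfolding e unfolding j binomial_Suc_Suc by simp
  next
    case False
    then have e: "n - j = 0" "n + 1 - j \<le> 1" "n - j - 1 = 0" "j - 1 \<ge> 1" using assms j by auto
    have "n + 1 - j choose (j + 1) = 0" using e(2) j by (simp add: binomial_eq_0)
    then show ?thesis unfolding e(1) e(3) using e(4) j by (cases i) (auto simp: binomial_eq_0)
  qed
qed

lemma g_rec: "n \<ge> 2 \<Longrightarrow> g (Suc (Suc n)) (Suc j) = g (Suc n) (Suc j) + g n j"
  unfolding g_def using binom_ar[of n j]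
  by (cases "j = 0") (auto simp: Suc_diff_le)

lemma T_g: "n \<ge> 2 \<Longrightarrow> card {A. P n A \<and> card A = k} = g n k"
proof (induction n arbitrary: k rule: less_induct)
  case (less n)
  show ?case
  proof (cases "n \<le> 3")
    case True
    then have "n = 2 \<or> n = 3" using less by auto
    then show ?thesis using base2 base3 by auto
  next
    case False
    obtain m where m: "n = Suc (Suc m)" "m \<ge> 2" using False by (intro that[of "n - 2"]) auto
    show ?thesis
    proof (cases k)
      case 0 then show ?thesis using card0 by (simp add: g_def)
    next
      case (Suc j)
      show ?thesis unfolding m Suc rec_card[OF m(2)] g_rec[OF m(2)]
        using less(1)[of "Suc m"] less(1)[of m] m by simp
    qed
  qed
qed

lemma g_Y:
  assumes "n \<ge> 2" "k \<le> n div 2"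
  shows "int (g n k) = Y (int n - int k) (int k)"
proof (cases "k = 0")
  case True
  then show ?thesis using assms by (simp add: g_def Y_def binom_def)
next
  case False
  then have k: "k \<ge> 1" "2 * k \<le> n" using assms by auto
  have a: "int n - int k = int (n - k)" "int n - int k - 1 = int (n - k - 1)" "int k - 1 = int (k - 1)"
    using k by auto
  have b1: "binom (int (n - k)) (int k) = int (n - k choose k)" by (simp add: binom_def)
  have b2: "binom (int (n - k - 1)) (int (k - 1)) = int (n - k - 1 choose (k - 1))" by (simp add: binom_def)
  have "Y (int n - int k) (int k) = int (n - k choose k) + int (n - k - 1 choose (k - 1))"
  proof -
    have a2: "int (n - k) - 1 = int (n - k - 1)" using k by auto
    show ?thesis by (simp only: Y_def a(1) a(3) a2 b1 b2)
  qed
  then show ?thesis using False unfolding g_def by simp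
qed

theorem mainTheorem19:
  fixes n k :: nat
  assumes "n \<ge> 2" and "k \<le> n div 2"
  shows "int (dminus n k) = Y (int n - int k) (int k)
       \<and> Y (int n - int k) (int k) = binom (int n - int k) (int k) + binom (int n - int k - 1) (int k - 1)"
  using g_Y[OF assms] T_g[OF assms(1)] dminus_P[of n k] by (simp add: Y_def)

end
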